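(* Let $2\le r<n$ be integers, let $p\in(0,1)$, and let real numbers $x_i\ge 0$ for $i=r+1,\dots,n$ and $y_i\ge u\ge 0$ for $i=1,\dots,r-1$ satisfy \[ \sum_{i=r+1}^n x_i + nu=\sum_{i=1}^{r-1}y_i. \] Then \[ \sum_{i=r+1}^n x_i^p+(r-1)u^p\le \Bigl(1-\frac1n\Bigr)^p\Bigl(\sum_{i=r+1}^n x_i^p+\sum_{i=1}^{r-1}y_i^p\Bigr). \] *)

theory Defs
  imports Complex_Main
begin

end

theory Submission
  imports Defs "HOL-Analysis.Convex"
begin

lemma young1:
  fixes a b p :: real
  assumes "0 \<le> a" "0 \<le> b" "0 < p" "p < 1"
  shows "a powr (1-p) * b powr p \<le> (1-p)*a + p*b"
proof (cases "a = 0 \<or> b = 0")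
  case True
  then show ?thesis using assms by auto
next
  case False
  then show ?thesis using assms Youngs_inequality_0[of "1-p" p a b] by auto
qed

lemma holder2:
  fixes A B P Q p :: real
  assumes "0 \<le> A" "0 \<le> B" "0 \<le> P" "0 \<le> Q" "0 < p" "p < 1"
  shows "A powr (1-p) * P powr p + B powr (1-p) * Q powr p \<le> (A+B) powr (1-p) * (P+Q) powr p"
proof (cases "A + B = 0 \<or> P + Q = 0")
  case True
  then have "A = 0 \<and> B = 0 \<or> P = 0 \<and> Q = 0" using assms by linarith
  then show ?thesis using assms by auto
next
  case False
  define s where "s = A + B"
  define t where "t = P + Q"
  have s: "s > 0" and t: "t > 0" using False assms by (auto simp: s_def t_def)
  have 1: "A powr (1-p) * P powr p = s powr (1-p) * t powr p * ((A/s) powr (1-p) * (P/t) powr p)"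
    using s t assms by (simp add: powr_divide)
  have 2: "B powr (1-p) * Q powr p = s powr (1-p) * t powr p * ((B/s) powr (1-p) * (Q/t) powr p)"
    using s t assms by (simp add: powr_divide)
  have 3: "(A/s) powr (1-p) * (P/t) powr p \<le> (1-p)*(A/s) + p*(P/t)"
    using young1[of "A/s" "P/t" p] assms s t by simp
  have 4: "(B/s) powr (1-p) * (Q/t) powr p \<le> (1-p)*(B/s) + p*(Q/t)"
    using young1[of "B/s" "Q/t" p] assms s t by simp
  have 5: "(1-p)*(A/s) + p*(P/t) + ((1-p)*(B/s) + p*(Q/t)) = 1"
  proof -
    have "(1-p)*(A/s) + p*(P/t) + ((1-p)*(B/s) + p*(Q/t)) = (1-p)*((A+B)/s) + p*((P+Q)/t)"
      by (simp add: algebra_simps add_divide_distrib)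
    also have "\<dots> = 1" using s t by (simp add: s_def[symmetric] t_def[symmetric])
    finally show ?thesis .
  qed
  have pos: "0 \<le> s powr (1-p) * t powr p" by simp
  have "A powr (1-p) * P powr p + B powr (1-p) * Q powr p
     \<le> s powr (1-p) * t powr p * ((1-p)*(A/s) + p*(P/t)) + s powr (1-p) * t powr p * ((1-p)*(B/s) + p*(Q/t))"
    unfolding 1 2
    by (intro add_mono mult_left_mono 3 4 pos)
  also have "\<dots> = s powr (1-p) * t powr p" using 5 by (simp flip: distrib_left)
  finally show ?thesis by (simp add: s_def t_def)
qed

lemma jensen2:
  fixes w a b p :: real
  assumes "0 \<le> w" "w \<le> 1" "0 \<le> a" "0 \<le> b" "0 < p" "p < 1"
  shows "(1-w) * a powr p + w * b powr p \<le> ((1-w)*a + w*b) powr p"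
proof -
  have e: "\<And>v c. 0 \<le> v \<Longrightarrow> 0 \<le> c \<Longrightarrow> v powr (1-p) * (v*c) powr p = v * c powr p"
  proof -
    fix v c :: real assume "0 \<le> v" "0 \<le> c"
    have vv: "v powr (1-p) * v powr p = v" using \<open>0 \<le> v\<close>
      by (metis powr_add diff_add_cancel powr_one)
    have "v powr (1-p) * (v*c) powr p = (v powr (1-p) * v powr p) * c powr p"
      using \<open>0 \<le> v\<close> \<open>0 \<le> c\<close> by (simp add: powr_mult)
    then show "v powr (1-p) * (v*c) powr p = v * c powr p" using vv by simp
  qed
  have "(1-w) powr (1-p) * ((1-w)*a) powr p + w powr (1-p) * (w*b) powr p
        \<le> ((1-w)+w) powr (1-p) * ((1-w)*a + w*b) powr p"
    by (rule holder2) (use assms in auto)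
  then show ?thesis using assms e[of "1-w" a] e[of w b] by simp
qed

lemma cond5:
  fixes g s K p :: real
  assumes "0 \<le> g" "0 < s" "0 \<le> K" "0 < p" "p < 1" "p*g + (1-p)*s \<le> K powr p"
  shows "g \<le> (g/s) powr (1-p) * K powr p"
proof (cases "g = 0")
  case True then show ?thesis by simp
next
  case False
  then have g: "g > 0" using assms by simp
  have "g powr p * s powr (1-p) \<le> K powr p"
    using young1[of g s p] assms
    by (smt (verit, best) mult.commute young1)
  then have "g powr (1-p) * (g powr p * s powr (1-p)) \<le> g powr (1-p) * K powr p"
    by (simp add: mult_left_mono)
  moreover have "g powr (1-p) * g powr p = g"
    using g by (simp flip: powr_add)
  ultimately have "g * s powr (1-p) \<le> g powr (1-p) * K powr p"
    by (metis mult.assoc)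
  then have "g \<le> g powr (1-p) * K powr p / s powr (1-p)"
    using assms by (simp add: pos_le_divide_eq)
  then show ?thesis using assms g by (simp add: powr_divide)
qed

lemma final_ineq:
  fixes m k n p s u c :: real
  assumes m1: "1 \<le> m" and k1: "1 \<le> k" and nmk: "n = m + k + 1"
    and p0: "0 < p" and p1: "p < 1" and s0: "0 \<le> s" and u0: "0 \<le> u"
    and cdef: "c = 1 - 1/n"
  shows "(1 - c powr p) * m * s powr p + (1 + (1 - c powr p) * (k - 1)) * u powr p
         \<le> c powr p * (m*s + (m+2)*u) powr p"
proof -
  define e where "e = 1 - c powr p"
  have n3: "n \<ge> 3" using m1 k1 nmk by simp
  have "0 < 1/n" "1/n < 1" using n3 by auto
  then have c0: "0 < c" and c1: "c < 1" using cdef by linarith+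
  have cpe: "c powr p = exp (p * ln c)" using c0 by (simp add: powr_def)
  have lnc: "ln c \<ge> - (1/(n-1))"
  proof -
    have "ln (1/c) \<le> 1/c - 1" using c0 by (intro ln_le_minus_one) simp
    moreover have "1/c - 1 = 1/(n-1)"
    proof -
      have "c = (n-1)/n" using cdef n3 by (simp add: field_simps)
      then have "1/c = n/(n-1)" by simp
      then show ?thesis using n3 by (simp add: field_simps)
    qed
    moreover have "ln (1/c) = - ln c" using c0 by (simp add: ln_div)
    ultimately show ?thesis by linarith
  qed
  have lnc0: "ln c < 0" using c0 c1 by simp
  have e0: "0 < e" unfolding e_def cpe using p0 lnc0
    by (simp add: mult_pos_neg)
  have e1: "e \<le> p/(n-1)"
  proof -
    have "exp (p * ln c) \<ge> 1 + p * ln c" by (rule exp_ge_add_one_self)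
    moreover have "p * ln c \<ge> p * (- (1/(n-1)))" using lnc p0 by (intro mult_left_mono) auto
    ultimately have "e \<le> p * (1/(n-1))" unfolding e_def cpe by linarith
    then show ?thesis by simp
  qed
  have en: "e * (n-1) \<le> p" using e1 n3 by (simp add: field_simps)
  define \<alpha> where "\<alpha> = e * m"
  define \<beta> where "\<beta> = 1 + e * (k - 1)"
  define \<sigma> where "\<sigma> = \<alpha> + \<beta>"
  have al0: "0 \<le> \<alpha>" using e0 m1 by (simp add: \<alpha>_def)
  have be0: "0 \<le> \<beta>" using e0 k1 by (simp add: \<beta>_def)
  have sig: "\<sigma> = 1 + e * (n - 2)" using nmk by (simp add: \<sigma>_def \<alpha>_def \<beta>_def algebra_simps)
  have sig0: "0 < \<sigma>" using sig e0 n3 by (simp add: add_pos_nonneg)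
  have ci: "p * \<alpha> + (1-p) * \<sigma> \<le> (c*m) powr p"
  proof -
    have "c powr p \<le> (c*m) powr p" using c0 m1 p0 by (intro powr_mono2) auto
    moreover have "p * \<alpha> + (1-p) * \<sigma> = 1 + e * (p*m + (1-p)*(n-2)) - p"
      unfolding sig \<alpha>_def by (simp add: algebra_simps)
    moreover have "e * (p*m + (1-p)*(n-2)) \<le> e * (n - 2)"
    proof -
      have "p*m + (1-p)*(n-2) \<le> p*(n-2) + (1-p)*(n-2)"
        using nmk k1 p0 by (intro add_right_mono mult_left_mono) auto
      then show ?thesis using e0 by (intro mult_left_mono) (auto simp: algebra_simps)
    qed
    moreover have "e * (n - 2) = e * (n-1) - e" by (simp add: algebra_simps)
    ultimately show ?thesis using en unfolding e_def by linarith
  qed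
  have cii: "p * \<beta> + (1-p) * \<sigma> \<le> (c*(m+2)) powr p"
  proof -
    have pos: "0 < c*(m+2)" using c0 m1 by simp
    have ln3: "1 \<le> ln (m+2)"
    proof -
      have "exp 1 \<le> m + 2" using exp_le m1 by linarith
      then show ?thesis using m1 by (subst ln_ge_iff) auto
    qed
    have "ln (c*(m+2)) = ln c + ln (m+2)" using c0 m1 by (simp add: ln_mult)
    then have L: "ln (c*(m+2)) \<ge> 1 - 1/(n-1)" using lnc ln3 by linarith
    have "(c*(m+2)) powr p = exp (p * ln (c*(m+2)))" using pos c0 m1 by (simp add: powr_def)
    also have "\<dots> \<ge> 1 + p * ln (c*(m+2))" by (rule exp_ge_add_one_self)
    finally have R: "(c*(m+2)) powr p \<ge> 1 + p * (1 - 1/(n-1))"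
      using L p0 mult_left_mono[OF L, of p] by linarith
    have "p * \<beta> + (1-p) * \<sigma> = 1 + e * (p*(k-1) + (1-p)*(n-2))"
      unfolding sig \<beta>_def by (simp add: algebra_simps)
    also have "\<dots> \<le> 1 + e * (n-2)"
    proof -
      have "p*(k-1) + (1-p)*(n-2) \<le> p*(n-2) + (1-p)*(n-2)"
        using nmk m1 p0 by (intro add_right_mono mult_left_mono) auto
      then have "e * (p*(k-1) + (1-p)*(n-2)) \<le> e * (p*(n-2) + (1-p)*(n-2))" using e0 by (intro mult_left_mono) auto
      then show ?thesis by (simp add: algebra_simps)
    qed
    also have "\<dots> \<le> 1 + p * (1 - 1/(n-1))"
    proof -
      have "e * (n-2) \<le> p/(n-1) * (n-2)" using e1 n3 by (intro mult_right_mono) auto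
      also have "\<dots> = p * (1 - 1/(n-1))" using n3 by (simp add: field_simps)
      finally show ?thesis by simp
    qed
    finally show ?thesis using R by linarith
  qed
  have h1: "\<alpha> \<le> (\<alpha>/\<sigma>) powr (1-p) * (c*m) powr p"
    by (rule cond5) (use al0 sig0 c0 m1 p0 p1 ci in auto)
  have h2: "\<beta> \<le> (\<beta>/\<sigma>) powr (1-p) * (c*(m+2)) powr p"
    by (rule cond5) (use be0 sig0 c0 m1 p0 p1 cii in auto)
  have H: "(\<alpha>/\<sigma>) powr (1-p) * (c*m*s) powr p + (\<beta>/\<sigma>) powr (1-p) * (c*(m+2)*u) powr p
     \<le> (\<alpha>/\<sigma> + \<beta>/\<sigma>) powr (1-p) * (c*m*s + c*(m+2)*u) powr p"
    by (rule holder2) (use al0 be0 sig0 c0 m1 s0 u0 p0 p1 in auto)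
  have AB: "\<alpha>/\<sigma> + \<beta>/\<sigma> = 1" using sig0 by (simp add: \<sigma>_def add_divide_distrib[symmetric])
  have W: "(c*m*s + c*(m+2)*u) powr p = c powr p * (m*s + (m+2)*u) powr p"
  proof -
    have "c*m*s + c*(m+2)*u = c * (m*s + (m+2)*u)" by (simp add: algebra_simps)
    then show ?thesis using c0 m1 s0 u0 by (simp add: powr_mult)
  qed
  have t1: "\<alpha> * s powr p \<le> (\<alpha>/\<sigma>) powr (1-p) * (c*m*s) powr p"
  proof -
    have "\<alpha> * s powr p \<le> (\<alpha>/\<sigma>) powr (1-p) * (c*m) powr p * s powr p"
      using h1 by (simp add: mult_right_mono)
    then show ?thesis using c0 m1 s0 by (simp add: powr_mult mult.assoc)
  qed
  have t2: "\<beta> * u powr p \<le> (\<beta>/\<sigma>) powr (1-p) * (c*(m+2)*u) powr p"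
  proof -
    have "\<beta> * u powr p \<le> (\<beta>/\<sigma>) powr (1-p) * (c*(m+2)) powr p * u powr p"
      using h2 by (simp add: mult_right_mono)
    then show ?thesis using c0 m1 u0 by (simp add: powr_mult mult.assoc)
  qed
  have "\<alpha> * s powr p + \<beta> * u powr p \<le> c powr p * (m*s + (m+2)*u) powr p"
    using t1 t2 H AB W by simp
  then show ?thesis by (simp add: \<alpha>_def \<beta>_def e_def)
qed

lemma lin_comb:
  fixes cp k A B Y X m Sp :: real
  assumes "cp*((k-1)*A + B) \<le> cp*Y" "(1-cp)*X \<le> (1-cp)*(m*Sp)"
    "(1-cp)*m*Sp + (1+(1-cp)*(k-1))*A \<le> cp*B"
  shows "X + k*A \<le> cp*(X+Y)"
  using assms by (simp add: algebra_simps)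

theorem proposition4:
  fixes r n :: nat and p u :: real and x y :: "nat \<Rightarrow> real"
  assumes "2 \<le> r" and "r < n"
    and "0 < p" and "p < 1"
    and "\<And>i. i \<in> {r+1..n} \<Longrightarrow> x i \<ge> 0"
    and "0 \<le> u"
    and "\<And>i. i \<in> {1..r-1} \<Longrightarrow> y i \<ge> u"
    and "(\<Sum>i=r+1..n. x i) + real n * u = (\<Sum>i=1..r-1. y i)"
  shows "(\<Sum>i=r+1..n. x i powr p) + real (r - 1) * u powr p
         \<le> (1 - 1 / real n) powr p * ((\<Sum>i=r+1..n. x i powr p) + (\<Sum>i=1..r-1. y i powr p))"
proof -
  note r2 = assms(1) and rn = assms(2) and p0 = assms(3) and p1 = assms(4)
    and x0 = assms(5) and u0 = assms(6) and yu = assms(7) and hsum = assms(8)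
  define I where "I = {r+1..n}"
  define J where "J = {1..r-1}"
  define m where "m = real (n - r)"
  define k where "k = real (r - 1)"
  define S where "S = (\<Sum>i\<in>I. x i)"
  define X where "X = (\<Sum>i\<in>I. x i powr p)"
  define Y where "Y = (\<Sum>i\<in>J. y i powr p)"
  define c where "c = 1 - 1 / real n"
  have cardI: "real (card I) = m" by (simp add: I_def m_def)
  have cardJ: "real (card J) = k" by (simp add: J_def k_def)
  have m1: "1 \<le> m" using rn by (simp add: m_def)
  have k1: "1 \<le> k" using r2 by (simp add: k_def)
  have nmk: "real n = m + k + 1" using r2 rn by (simp add: m_def k_def of_nat_diff)
  have x0': "\<And>i. i \<in> I \<Longrightarrow> 0 \<le> x i" using x0 by (simp add: I_def)
  have yu': "\<And>i. i \<in> J \<Longrightarrow> u \<le> y i" using yu by (simp add: J_def)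
  have S0: "0 \<le> S" unfolding S_def using x0' by (intro sum_nonneg) auto
  define s where "s = S / m"
  have s0: "0 \<le> s" using S0 m1 by (simp add: s_def)
  have Ss: "S = m * s" using m1 by (simp add: s_def)
  have Xb: "X \<le> m * s powr p"
  proof (cases "s = 0")
    case True
    then have "S = 0" using Ss by simp
    then have "\<forall>i\<in>I. x i = 0" using x0' unfolding S_def
      by (subst sum_nonneg_eq_0_iff[symmetric]) (auto simp: I_def)
    then have "X = 0" unfolding X_def by simp
    then show ?thesis using True by simp
  next
    case False
    then have spos: "0 < s" using s0 by simp
    have sp: "0 < s powr (1-p)" using spos by simp
    have each: "\<And>i. i \<in> I \<Longrightarrow> x i powr p \<le> ((1-p)*s + p * x i) / s powr (1-p)"
    proof -
      fix i assume "i \<in> I"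
      then have "s powr (1-p) * x i powr p \<le> (1-p)*s + p * x i"
        using young1[of s "x i" p] s0 x0' p0 p1 by auto
      then show "x i powr p \<le> ((1-p)*s + p * x i) / s powr (1-p)"
        using sp by (simp add: pos_le_divide_eq mult.commute)
    qed
    have "X \<le> (\<Sum>i\<in>I. ((1-p)*s + p * x i) / s powr (1-p))"
      unfolding X_def using each by (rule sum_mono)
    also have "\<dots> = (real (card I) * ((1-p)*s) + p * S) / s powr (1-p)"
      by (simp add: sum_divide_distrib[symmetric] sum.distrib sum_distrib_left S_def)
    also have "\<dots> = m * s / s powr (1-p)"
      using cardI Ss by (simp add: algebra_simps)
    also have "\<dots> = m * s powr p"
    proof -
      have ee: "s powr p * s powr (1-p) = s" using spos by (simp flip: powr_add)
      have "m * s / s powr (1-p) = m * s powr p * (s powr (1-p) / s powr (1-p))"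
        by (subst ee[symmetric]) (simp add: mult.assoc)
      then show ?thesis using sp by simp
    qed
    finally show ?thesis .
  qed
  define Z where "Z = S + (m+1)*u"
  have sumyu: "(\<Sum>i\<in>J. y i - u) = Z"
  proof -
    have "(\<Sum>i\<in>J. y i - u) = (\<Sum>i\<in>J. y i) - k * u"
      using cardJ by (simp add: sum_subtractf)
    also have "\<dots> = S + real n * u - k * u" using hsum by (simp add: S_def I_def J_def)
    finally show ?thesis using nmk by (simp add: Z_def algebra_simps)
  qed
  have Z0: "0 \<le> Z" using S0 u0 m1 by (simp add: Z_def)
  have Yb: "(k - 1) * u powr p + (u + Z) powr p \<le> Y"
  proof (cases "Z = 0")
    case True
    have "\<forall>i\<in>J. y i - u = 0"
      using sumyu True yu' by (subst sum_nonneg_eq_0_iff[symmetric]) (auto simp: J_def)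
    then have "Y = k * u powr p" using cardJ by (simp add: Y_def)
    then show ?thesis using True by (simp add: algebra_simps)
  next
    case False
    then have Zp: "0 < Z" using Z0 by simp
    define lam where "lam i = (y i - u) / Z" for i
    have lam_le: "\<And>i. i \<in> J \<Longrightarrow> 0 \<le> lam i \<and> lam i \<le> 1"
    proof -
      fix i assume iJ: "i \<in> J"
      have "y i - u \<le> (\<Sum>j\<in>J. y j - u)"
        using iJ yu' by (intro member_le_sum) (auto simp: J_def)
      then show "0 \<le> lam i \<and> lam i \<le> 1" using Zp iJ yu' sumyu
        by (auto simp: lam_def divide_simps)
    qed
    have each: "\<And>i. i \<in> J \<Longrightarrow> (1 - lam i) * u powr p + lam i * (u + Z) powr p \<le> y i powr p"
    proof -
      fix i assume iJ: "i \<in> J"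
      have lz: "lam i * Z = y i - u" using Zp by (simp add: lam_def)
      have "(1 - lam i) * u + lam i * (u + Z) = u + lam i * Z" by (simp add: algebra_simps)
      then have "(1 - lam i) * u + lam i * (u + Z) = y i" using lz by simp
      then show "(1 - lam i) * u powr p + lam i * (u + Z) powr p \<le> y i powr p"
        using jensen2[of "lam i" u "u+Z" p] lam_le[OF iJ] u0 Z0 p0 p1 by simp
    qed
    have suml: "(\<Sum>i\<in>J. lam i) = 1"
      using sumyu Zp by (simp add: lam_def sum_divide_distrib[symmetric])
    have "(\<Sum>i\<in>J. (1 - lam i) * u powr p + lam i * (u + Z) powr p)
        = k * u powr p - (\<Sum>i\<in>J. lam i) * u powr p + (\<Sum>i\<in>J. lam i) * (u + Z) powr p"
      using cardJ by (simp add: sum.distrib sum_subtractf sum_distrib_right algebra_simps)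
    also have "\<dots> = (k - 1) * u powr p + (u + Z) powr p" using suml by (simp add: algebra_simps)
    finally have eq: "(\<Sum>i\<in>J. (1 - lam i) * u powr p + lam i * (u + Z) powr p) = (k - 1) * u powr p + (u + Z) powr p" .
    have "(\<Sum>i\<in>J. (1 - lam i) * u powr p + lam i * (u + Z) powr p) \<le> Y"
      unfolding Y_def using each by (rule sum_mono)
    then show ?thesis using eq by simp
  qed
  have W: "u + Z = m*s + (m+2)*u" using Ss by (simp add: Z_def algebra_simps)
  have F: "(1 - c powr p) * m * s powr p + (1 + (1 - c powr p) * (k - 1)) * u powr p
         \<le> c powr p * (m*s + (m+2)*u) powr p"
    by (rule final_ineq[OF m1 k1 nmk p0 p1 s0 u0]) (simp add: c_def)
  have c0: "0 < c" using rn r2 by (simp add: c_def field_simps)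
  have cle: "c \<le> 1" by (simp add: c_def)
  have cp1: "c powr p \<le> 1" using powr_mono2[of p c 1] c0 p0 cle by simp
  define cp where "cp = c powr p"
  have cp0: "0 \<le> cp" by (simp add: cp_def)
  have a1: "cp * ((k - 1) * u powr p + (u + Z) powr p) \<le> cp * Y"
    using Yb cp0 by (rule mult_left_mono)
  have a2: "(1 - cp) * X \<le> (1 - cp) * (m * s powr p)"
    using Xb cp1 by (intro mult_left_mono) (auto simp: cp_def)
  have F': "(1-cp)*m*(s powr p) + (1+(1-cp)*(k-1))*(u powr p) \<le> cp*((u + Z) powr p)"
    using F unfolding W cp_def .
  have "X + k * u powr p \<le> cp * (X + Y)"
    by (rule lin_comb[OF a1 a2 F'])
  then show ?thesis by (simp add: X_def Y_def I_def J_def k_def c_def cp_def)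
qed

end
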